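(* Let $(X,T)$ be a minimal flow on a compact Hausdorff space $X$ (no assumption on $T$ and no invariant measure assumed). Then $P(x)\subset\overline{V(x)}$ for every $x\in X$. If moreover $X$ is metrizable, then $P\subset V$.
   Context: $X$ compact Hausdorff, $T$ a topological group acting continuously on $X$; minimal means every orbit is dense. Proximal relation: $(x,y)\in P$ iff there are a net $\{t_i\}\subset T$ and $z\in X$ with $t_ix\to z$ and $t_iy\to z$. Veech relation: $(x,y)\in V$ iff there are $z\in X$ and a net $\{t_i\}\subset T$ with $t_ix\to z$ and $t_i^{-1}z\to y$. For a relation $R$, $R(x)=\{y:(x,y)\in R\}$. *)

theory Defs
  imports "HOL-Analysis.Analysis"
begin

text \<open>A group T (written additively, not necessarily commutative, class topological_group_add)
  acting continuously on a topological space X (the universe of type 'a).\<close>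
definition continuous_action :: "('g::topological_group_add \<Rightarrow> 'a::topological_space \<Rightarrow> 'a) \<Rightarrow> bool" where
  "continuous_action act \<longleftrightarrow>
     (\<forall>x. act 0 x = x) \<and> (\<forall>s t x. act (s + t) x = act s (act t x)) \<and>
     continuous_on UNIV (\<lambda>p. act (fst p) (snd p))"

definition minimal_flow :: "('g::topological_group_add \<Rightarrow> 'a::topological_space \<Rightarrow> 'a) \<Rightarrow> bool" where
  "minimal_flow act \<longleftrightarrow> (\<forall>x. closure (range (\<lambda>t. act t x)) = UNIV)"

text \<open>Nets in T are represented by proper filters on T (a net t_i gives the image filter of
  the tails; conversely every proper filter is the tail filter of a net).\<close>
definition proximal_rel :: "('g::topological_group_add \<Rightarrow> 'a::topological_space \<Rightarrow> 'a) \<Rightarrow> ('a \<times> 'a) set" where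
  "proximal_rel act = {(x, y). \<exists>(F::'g filter) z. F \<noteq> bot \<and>
      ((\<lambda>t. act t x) \<longlongrightarrow> z) F \<and> ((\<lambda>t. act t y) \<longlongrightarrow> z) F}"

definition veech_rel :: "('g::topological_group_add \<Rightarrow> 'a::topological_space \<Rightarrow> 'a) \<Rightarrow> ('a \<times> 'a) set" where
  "veech_rel act = {(x, y). \<exists>(F::'g filter) z. F \<noteq> bot \<and>
      ((\<lambda>t. act t x) \<longlongrightarrow> z) F \<and> ((\<lambda>t. act (- t) z) \<longlongrightarrow> y) F}"

end

theory Submission
  imports Defs "HOL-Library.Countable"
begin

lemma refine_filter:
  fixes f :: "'b \<Rightarrow> 'a::topological_space"
  assumes "compact (UNIV::'a set)" "F \<noteq> bot"
  obtains z where "inf F (filtercomap f (nhds z)) \<noteq> bot"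
    "(f \<longlongrightarrow> z) (inf F (filtercomap f (nhds z)))"
proof -
  have "filtermap f F \<noteq> bot" using assms(2) by (simp add: filtermap_bot_iff)
  then obtain z where z: "inf (nhds z) (filtermap f F) \<noteq> bot"
    using assms(1) unfolding compact_filter by auto
  have "inf F (filtercomap f (nhds z)) \<noteq> bot"
  proof
    assume "inf F (filtercomap f (nhds z)) = bot"
    then have "eventually (\<lambda>_. False) (inf F (filtercomap f (nhds z)))" by simp
    then obtain Q R where Q: "eventually Q F" and R: "eventually R (filtercomap f (nhds z))"
      and QR: "\<forall>x. Q x \<and> R x \<longrightarrow> False" unfolding eventually_inf by blast
    from R obtain S where S: "eventually S (nhds z)" and SR: "\<forall>x. S (f x) \<longrightarrow> R x"
      unfolding eventually_filtercomap by blast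
    have "eventually (\<lambda>a. \<not> S a) (filtermap f F)"
      unfolding eventually_filtermap using Q by (rule eventually_mono) (use QR SR in blast)
    then have "eventually (\<lambda>_. False) (inf (nhds z) (filtermap f F))"
      unfolding eventually_inf using S by blast
    then show False using z by (simp add: eventually_False)
  qed
  moreover have "(f \<longlongrightarrow> z) (inf F (filtercomap f (nhds z)))"
    by (rule filterlim_mono[OF filterlim_filtercomap]) auto
  ultimately show ?thesis using that by blast
qed


datatype tm = G nat | Sub tm rat | Ng tm | Mn tm tm | Cmp tm tm | Inv tm | Pk tm

instance tm :: countable by countable_datatype

locale core =
  fixes act :: "'g::topological_group_add \<Rightarrow> 'a::t2_space \<Rightarrow> 'a"
    and x y :: 'a and g :: "nat \<Rightarrow> 'a \<Rightarrow> real"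
  assumes cpt: "compact (UNIV::'a set)"
    and cont: "\<And>t. continuous_on UNIV (act t)"
    and act0: "\<And>a. act 0 a = a"
    and actadd: "\<And>s t a. act (s + t) a = act s (act t a)"
    and gcont: "\<And>n. continuous_on UNIV (g n)"
    and gy: "\<And>n. g n y > 0"
    and prox: "\<And>U. open U \<Longrightarrow> U \<noteq> {} \<Longrightarrow> \<exists>t. act t x \<in> U \<and> act t y \<in> U"
begin

fun evF :: "tm \<Rightarrow> 'a \<Rightarrow> real" and evG :: "tm \<Rightarrow> 'g" where
  "evF (G n) = g n"
| "evF (Sub e c) = (\<lambda>a. evF e a - of_rat c)"
| "evF (Ng e) = (\<lambda>a. - evF e a)"
| "evF (Mn e e') = (\<lambda>a. min (evF e a) (evF e' a))"
| "evF (Cmp e h) = (\<lambda>a. evF e (act (evG h) a))"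
| "evF (Inv h) = (\<lambda>a. 0)"
| "evF (Pk h) = (\<lambda>a. 0)"
| "evG (Inv h) = - evG h"
| "evG (Pk e) = (SOME t. evF e (act t x) > 0 \<and> evF e (act t y) > 0)"
| "evG (G n) = 0"
| "evG (Sub e c) = 0"
| "evG (Ng e) = 0"
| "evG (Mn e e') = 0"
| "evG (Cmp e h) = 0"

lemma evF_cont: "continuous_on UNIV (evF e)"
proof (induction e)
  case (Cmp e h)
  then show ?case using cont[of "evG h"]
    by (auto intro!: continuous_on_compose2[where g="evF e" and f="act (evG h)"])
qed (auto intro!: continuous_intros gcont)

lemma evF_open: "open {a. evF e a > c}"
  using open_Collect_less[OF continuous_on_const evF_cont] .

lemma evF_closed: "closed {a. evF e a \<ge> c}"
  using closed_Collect_le[OF continuous_on_const evF_cont] .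

lemma pk:
  assumes "evF e a > 0"
  shows "evF e (act (evG (Pk e)) x) > 0 \<and> evF e (act (evG (Pk e)) y) > 0"
proof -
  have "\<exists>t. act t x \<in> {a. evF e a > 0} \<and> act t y \<in> {a. evF e a > 0}"
    using assms by (intro prox evF_open) auto
  then have "\<exists>t. evF e (act t x) > 0 \<and> evF e (act t y) > 0" by simp
  then show ?thesis by simp (rule someI_ex)
qed

fun mg :: "nat \<Rightarrow> tm \<Rightarrow> tm" where
  "mg 0 h = Cmp (G 0) (Inv h)"
| "mg (Suc n) h = Mn (mg n h) (Cmp (G (Suc n)) (Inv h))"

lemma mg: "evF (mg n h) a > 0 \<longleftrightarrow> (\<forall>m\<le>n. g m (act (- evG h) a) > 0)"
  by (induction n) (auto simp: le_Suc_eq)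

lemma act_inv: "act (- t) (act t a) = a"
  using actadd[of "-t" t a] act0 by simp

lemma rat_between:
  fixes r :: real assumes "0 < r" obtains c where "0 < (of_rat c :: real)" "of_rat c < r"
  using of_rat_dense[OF assms] by blast

definition stepP :: "tm \<Rightarrow> tm \<Rightarrow> nat \<Rightarrow> tm \<Rightarrow> bool" where
  "stepP e u n e' \<longleftrightarrow> (\<exists>a. evF e' a > 0) \<and> (\<forall>a. evF e' a \<ge> 0 \<longrightarrow> evF e a > 0) \<and>
     ((\<exists>a. evF e a > 0 \<and> evF u a > 0) \<longrightarrow>
        (\<exists>h. evF u (act (evG h) x) > 0 \<and> (\<forall>a. evF e' a \<ge> 0 \<longrightarrow> (\<forall>m\<le>n. g m (act (- evG h) a) > 0))))"

lemma step:
  assumes "evF e a0 > 0"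
  shows "\<exists>e'. stepP e u n e'"
proof (cases "\<exists>a. evF e a > 0 \<and> evF u a > 0")
  case True
  then obtain a where a: "evF (Mn e u) a > 0" by auto
  define h where "h = Pk (Mn e u)"
  from pk[OF a] have hx: "evF (Mn e u) (act (evG h) x) > 0"
    and hy: "evF (Mn e u) (act (evG h) y) > 0" unfolding h_def by auto
  define p where "p = act (evG h) y"
  define k where "k = Mn (Mn e u) (mg n h)"
  have "evF (mg n h) p > 0" unfolding mg p_def act_inv using gy by auto
  then have kp: "evF k p > 0" using hy unfolding k_def p_def by simp
  obtain c where c: "0 < (of_rat c::real)" "of_rat c < evF k p" using rat_between[OF kp] by blast
  have P1: "\<exists>a. evF (Sub k c) a > 0" using c by (auto intro!: exI[of _ p])
  have P2: "\<forall>a. evF (Sub k c) a \<ge> 0 \<longrightarrow> evF e a > 0"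
    proof (intro allI impI)
      fix a assume "evF (Sub k c) a \<ge> 0"
      then have "of_rat c \<le> evF e a" by (simp add: k_def)
      then show "evF e a > 0" using c(1) by linarith
    qed
    have A: "\<forall>a. evF (Sub k c) a \<ge> 0 \<longrightarrow> (\<forall>m\<le>n. g m (act (- evG h) a) > 0)"
    proof (intro allI impI)
      fix a m assume a: "evF (Sub k c) a \<ge> 0" and "m \<le> n"
      have "of_rat c \<le> evF (mg n h) a" using a by (simp add: k_def)
      then have "evF (mg n h) a > 0" using c(1) by linarith
      then show "g m (act (- evG h) a) > 0" using \<open>m \<le> n\<close> mg by blast
    qed
    have B: "evF u (act (evG h) x) > 0" using hx by simp
    show ?thesis unfolding stepP_def by (rule exI[of _ "Sub k c"]) (use P1 P2 A B in blast)
next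
  case False
  obtain c where c: "0 < (of_rat c::real)" "of_rat c < evF e a0" using rat_between[OF assms] by blast
  have c0: "\<And>a. of_rat c \<le> evF e a \<Longrightarrow> 0 < evF e a" using c(1) by linarith
  show ?thesis unfolding stepP_def
    by (intro exI[of _ "Sub e c"] conjI) (use c c0 False in \<open>auto intro!: exI[of _ a0]\<close>)
qed


lemma cont_tendsto:
  assumes "(f \<longlongrightarrow> z) F" shows "((\<lambda>t. evF u (f t)) \<longlongrightarrow> evF u z) F"
proof -
  have "isCont (evF u) z" using evF_cont[of u] by (simp add: continuous_on_eq_continuous_at)
  then show ?thesis using assms by (rule isCont_tendsto_compose)
qed

lemma core_result:
  "\<exists>z F. F \<noteq> bot \<and> ((\<lambda>t. act t x) \<longlongrightarrow> z) F \<and> (\<forall>m. eventually (\<lambda>t. g m (act (- t) z) > 0) F)"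
proof -
  define nxt where "nxt e u n = (SOME e'. stepP e u n e')" for e u n
  have nxt: "stepP e u n (nxt e u n)" if "evF e a > 0" for e u n a
    unfolding nxt_def using step[OF that] by (rule someI_ex)
  define req where "req k = ((from_nat (fst (prod_decode k)) :: tm), snd (prod_decode k))" for k
  define E where "E = rec_nat (G 0) (\<lambda>k e. nxt e (fst (req k)) (snd (req k)))"
  have E0: "E 0 = G 0" and ES: "E (Suc k) = nxt (E k) (fst (req k)) (snd (req k))" for k
    by (simp_all add: E_def)
  have pos: "\<exists>a. evF (E k) a > 0" for k
  proof (induction k)
    case 0 show ?case using gy[of 0] by (auto simp: E0)
  next
    case (Suc k)
    then obtain a where "evF (E k) a > 0" by blast
    from nxt[OF this] show ?case unfolding ES stepP_def by blast
  qed
  have st: "stepP (E k) (fst (req k)) (snd (req k)) (E (Suc k))" for k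
  proof -
    obtain a where "evF (E k) a > 0" using pos by blast
    then show ?thesis unfolding ES by (rule nxt)
  qed
  define C where "C k = {a. evF (E k) a \<ge> 0}" for k
  have Csub: "C (Suc k) \<subseteq> {a. evF (E k) a > 0}" for k
    using st[of k] unfolding stepP_def C_def by auto
  have "C (Suc k) \<subseteq> C k" for k using Csub[of k] unfolding C_def by auto
  then have dec: "decseq C" by (simp add: decseq_Suc_iff)
  have Cne: "C k \<noteq> {}" for k using pos[of k] unfolding C_def by (auto intro: less_imp_le)
  have "UNIV \<inter> \<Inter>(range C) \<noteq> {}"
  proof (rule compact_imp_fip[OF cpt])
    show "closed T" if "T \<in> range C" for T using that evF_closed unfolding C_def by auto
    fix F' assume "finite F'" "F' \<subseteq> range C"
    then obtain I where I: "finite I" "F' = C ` I" by (meson finite_subset_image)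
    define N where "N = Max (insert 0 I)"
    have "C N \<subseteq> T" if "T \<in> F'" for T
    proof -
      from that I obtain i where "i \<in> I" "T = C i" by blast
      then have "i \<le> N" unfolding N_def using I(1) by simp
      then show ?thesis using dec \<open>T = C i\<close> by (simp add: decseqD)
    qed
    then have "C N \<subseteq> \<Inter>F'" by blast
    then show "UNIV \<inter> \<Inter>F' \<noteq> {}" using Cne[of N] by blast
  qed
  then obtain z where zC: "\<And>k. z \<in> C k" by blast
  have key: "\<exists>h. evF u (act (evG h) x) > 0 \<and> (\<forall>m\<le>n. g m (act (- evG h) z) > 0)"
    if "evF u z > 0" for u n
  proof -
    define k where "k = prod_encode (to_nat u, n)"
    have rk: "req k = (u, n)" unfolding req_def k_def by simp
    have "evF (E k) z > 0" using Csub[of k] zC[of "Suc k"] by blast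
    moreover have "evF (E (Suc k)) z \<ge> 0" using zC[of "Suc k"] unfolding C_def by simp
    ultimately show ?thesis using st[of k] that unfolding rk stepP_def by auto
  qed
  define B :: "(tm \<times> nat) set" where "B = {(u, n). evF u z > 0}"
  define S where "S b = {t. \<exists>h. t = evG h \<and> evF (fst b) (act t x) > 0 \<and>
                     (\<forall>m\<le>snd b. g m (act (- t) z) > 0)}" for b
  define F0 where "F0 = (INF b\<in>B. principal (S b))"
  have E0z: "evF (E 0) z > 0" using Csub[of 0] zC[of 1] by auto
  have Bne: "B \<noteq> {}" using E0z unfolding B_def by auto
  have dir: "\<exists>c\<in>B. principal (S c) \<le> inf (principal (S a)) (principal (S b))"
    if "a \<in> B" "b \<in> B" for a b
  proof -
    obtain u1 n1 u2 n2 where ab: "a = (u1, n1)" "b = (u2, n2)" by force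
    have "(Mn u1 u2, max n1 n2) \<in> B" using that unfolding ab B_def by simp
    moreover have "S (Mn u1 u2, max n1 n2) \<subseteq> S a \<inter> S b" unfolding ab S_def by auto
    ultimately show ?thesis by (intro bexI[of _ "(Mn u1 u2, max n1 n2)"]) (auto simp: inf_principal)
  qed
  have Sne: "S b \<noteq> {}" if "b \<in> B" for b
  proof -
    obtain u n where b: "b = (u, n)" by force
    from key[of u n] that obtain h where "evF u (act (evG h) x) > 0" "\<forall>m\<le>n. g m (act (- evG h) z) > 0"
      unfolding B_def b by auto
    then show ?thesis unfolding S_def b by auto
  qed
  have evF0: "eventually P F0 \<longleftrightarrow> (\<exists>b\<in>B. eventually P (principal (S b)))" for P
    unfolding F0_def by (rule eventually_INF_base[OF Bne dir])
  have F0ne: "F0 \<noteq> bot"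
  proof
    assume "F0 = bot"
    then have "eventually (\<lambda>_. False) F0" by simp
    then show False using Sne unfolding evF0 eventually_principal by auto
  qed
  have evS: "eventually (\<lambda>t. t \<in> S b) F0" if "b \<in> B" for b
    using that unfolding evF0 eventually_principal by auto
  obtain z' where F1ne: "inf F0 (filtercomap (\<lambda>t. act t x) (nhds z')) \<noteq> bot"
    and lim: "((\<lambda>t. act t x) \<longlongrightarrow> z') (inf F0 (filtercomap (\<lambda>t. act t x) (nhds z')))"
    using refine_filter[OF cpt F0ne] by blast
  define F1 where "F1 = inf F0 (filtercomap (\<lambda>t. act t x) (nhds z'))"
  have F1le: "F1 \<le> F0" unfolding F1_def by simp
  have ge: "evF u z' \<ge> evF u z" for u
  proof (rule ccontr)
    assume "\<not> evF u z' \<ge> evF u z"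
    then obtain c where c: "evF u z' < of_rat c" "of_rat c < evF u z" by (meson not_le of_rat_dense)
    have "(Sub u c, 0) \<in> B" using c unfolding B_def by simp
    from evS[OF this] have "eventually (\<lambda>t. of_rat c \<le> evF u (act t x)) F0"
      by (rule eventually_mono) (auto simp: S_def)
    then have "eventually (\<lambda>t. of_rat c \<le> evF u (act t x)) F1" by (rule filter_leD[OF F1le])
    moreover have "((\<lambda>t. evF u (act t x)) \<longlongrightarrow> evF u z') F1"
      using cont_tendsto[OF lim] unfolding F1_def .
    ultimately have "of_rat c \<le> evF u z'"
      using F1ne unfolding F1_def by (intro tendsto_lowerbound) auto
    then show False using c by simp
  qed
  have eq: "evF u z' = evF u z" for u
    using ge[of u] ge[of "Ng u"] by simp
  show ?thesis
  proof (intro exI[of _ z'] exI[of _ F1] conjI allI)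
    show "F1 \<noteq> bot" using F1ne unfolding F1_def .
    show "((\<lambda>t. act t x) \<longlongrightarrow> z') F1" using lim unfolding F1_def .
    fix m
    have "(E 0, m) \<in> B" using E0z unfolding B_def by simp
    from evS[OF this] have "eventually (\<lambda>t. g m (act (- t) z') > 0) F0"
    proof (rule eventually_mono)
      fix t assume "t \<in> S (E 0, m)"
      then obtain h where h: "t = evG h" "g m (act (- t) z) > 0" unfolding S_def by auto
      have "g m (act (- t) z') = evF (Cmp (G m) (Inv h)) z'" using h by simp
      also have "\<dots> = evF (Cmp (G m) (Inv h)) z" by (rule eq)
      also have "\<dots> = g m (act (- t) z)" using h by simp
      finally show "g m (act (- t) z') > 0" using h by simp
    qed
    then show "eventually (\<lambda>t. g m (act (- t) z') > 0) F1" by (rule filter_leD[OF F1le])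
  qed
qed

end

lemma Hausd: "Hausdorff_space (euclidean :: 'a::t2_space topology)"
    unfolding Hausdorff_space_def disjnt_def
  proof (intro allI impI)
    fix u v :: 'a assume "u \<in> topspace euclidean \<and> v \<in> topspace euclidean \<and> u \<noteq> v"
    then have "u \<noteq> v" by blast
    then obtain U V where UV: "open U" "open V" "u \<in> U" "v \<in> V" "U \<inter> V = {}"
      using separation_t2[of u v] by blast
    show "\<exists>U V. openin euclidean U \<and> openin euclidean V \<and> u \<in> U \<and> v \<in> V \<and> U \<inter> V = {}"
      by (rule exI[of _ U], rule exI[of _ V]) (simp add: UV)
  qed

lemma cozero:
  fixes y :: "'a::t2_space"
  assumes cpt: "compact (UNIV::'a set)" and N: "open N" "y \<in> N"
  obtains f :: "'a \<Rightarrow> real" where "continuous_on UNIV f" "f y > 0" "\<And>a. f a \<ge> 0 \<Longrightarrow> a \<in> N"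
proof -
  have H: "Hausdorff_space (euclidean :: 'a topology)" by (rule Hausd)
  have "compact_space (euclidean :: 'a topology)" using cpt by (simp add: compact_space_def)
  then have "normal_space (euclidean :: 'a topology)"
    using H compact_Hausdorff_or_regular_imp_normal_space by blast
  then have "completely_regular_space (euclidean :: 'a topology)"
    using H normal_imp_completely_regular_space by blast
  moreover have "closedin euclidean (- N)"
  proof -
    have "closed (- N)" using N(1) by (rule closed_Compl)
    then show ?thesis by (simp only: closed_closedin)
  qed
  moreover have "y \<in> topspace euclidean - (- N)" using N by simp
  ultimately obtain h where h: "continuous_map euclidean (top_of_set {0..1}) h" "h y = 0" "h ` (- N) \<subseteq> {1::real}"
    unfolding completely_regular_space_def by blast
  have "continuous_map euclidean euclidean h" using h(1) by (simp add: continuous_map_in_subtopology)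
  then have hc: "continuous_on UNIV h" by simp
  show ?thesis
  proof
    show "continuous_on UNIV (\<lambda>a. 1/2 - h a)" by (intro continuous_intros hc)
    show "1/2 - h y > 0" using h by simp
    fix a assume "1/2 - h a \<ge> 0"
    show "a \<in> N"
    proof (rule ccontr)
      assume "a \<notin> N" then have "h a = 1" using h(3) by auto
      then show False using \<open>1/2 - h a \<ge> 0\<close> by simp
    qed
  qed
qed

lemma prox_from_P:
  fixes act :: "'g::topological_group_add \<Rightarrow> 'a::t2_space \<Rightarrow> 'a"
  assumes ca: "continuous_action act" and mf: "minimal_flow act"
    and P: "(x, y) \<in> proximal_rel act" and U: "open U" "U \<noteq> {}"
  shows "\<exists>t. act t x \<in> U \<and> act t y \<in> U"
proof -
  have act0: "\<And>a. act 0 a = a" and actadd: "\<And>s t a. act (s + t) a = act s (act t a)"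
    and jc: "continuous_on UNIV (\<lambda>p. act (fst p) (snd p))" using ca unfolding continuous_action_def by auto
  have cont: "continuous_on UNIV (act s)" for s
  proof -
    have "continuous_on UNIV (\<lambda>a. act (fst (s, a)) (snd (s, a)))"
      by (rule continuous_on_compose2[OF jc]) (auto intro!: continuous_intros)
    then show ?thesis by simp
  qed
  from P obtain F :: "'g filter" and z where F: "F \<noteq> bot" "((\<lambda>t. act t x) \<longlongrightarrow> z) F"
    "((\<lambda>t. act t y) \<longlongrightarrow> z) F" unfolding proximal_rel_def by auto
  have "closure (range (\<lambda>t. act t z)) = UNIV" using mf unfolding minimal_flow_def by auto
  then have "U \<inter> range (\<lambda>t. act t z) \<noteq> {}"
    using U open_Int_closure_eq_empty[OF U(1), of "range (\<lambda>t. act t z)"] by simp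
  then obtain s where s: "act s z \<in> U" by blast
  define U' where "U' = act s -` U"
  have U': "open U'" "z \<in> U'" unfolding U'_def using s U(1) cont[of s]
    by (auto simp: continuous_on_open_vimage[OF open_UNIV])
  have "eventually (\<lambda>t. act t x \<in> U' \<and> act t y \<in> U') F"
    using topological_tendstoD[OF F(2) U'] topological_tendstoD[OF F(3) U'] by (rule eventually_conj)
  then obtain t where "act t x \<in> U'" "act t y \<in> U'" using eventually_happens F(1) by blast
  then show ?thesis unfolding U'_def by (intro exI[of _ "s + t"]) (simp add: actadd)
qed


theorem mainTheorem8:
  fixes act :: "'g::topological_group_add \<Rightarrow> 'a::t2_space \<Rightarrow> 'a"
  assumes "compact (UNIV :: 'a set)"
    and "continuous_action act"
    and "minimal_flow act"
  shows "(\<forall>x. proximal_rel act `` {x} \<subseteq> closure (veech_rel act `` {x}))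
       \<and> (metrizable_space (euclidean :: 'a topology) \<longrightarrow> proximal_rel act \<subseteq> veech_rel act)"
proof -
  have act0: "\<And>a. act 0 a = a" and actadd: "\<And>s t a. act (s + t) a = act s (act t a)"
    and jc: "continuous_on UNIV (\<lambda>p. act (fst p) (snd p))" using assms(2) unfolding continuous_action_def by auto
  have cont: "continuous_on UNIV (act s)" for s
  proof -
    have "continuous_on UNIV (\<lambda>a. act (fst (s, a)) (snd (s, a)))"
      by (rule continuous_on_compose2[OF jc]) (auto intro!: continuous_intros)
    then show ?thesis by simp
  qed
  have prox: "\<exists>t. act t x \<in> U \<and> act t y \<in> U"
    if "(x, y) \<in> proximal_rel act" "open U" "U \<noteq> {}" for x y U
    using prox_from_P[OF assms(2,3) that] .
  have part1: "\<forall>x. proximal_rel act `` {x} \<subseteq> closure (veech_rel act `` {x})"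
  proof (intro allI subsetI)
    fix x y assume "y \<in> proximal_rel act `` {x}"
    then have P: "(x, y) \<in> proximal_rel act" by simp
    show "y \<in> closure (veech_rel act `` {x})"
    proof (rule ccontr)
      assume ny: "y \<notin> closure (veech_rel act `` {x})"
      define N where "N = - closure (veech_rel act `` {x})"
      have N: "open N" "y \<in> N" using ny unfolding N_def by auto
      obtain f :: "'a \<Rightarrow> real" where f: "continuous_on UNIV f" "f y > 0" "\<And>a. f a \<ge> 0 \<Longrightarrow> a \<in> N"
        using cozero[OF assms(1) N] by blast
      interpret c: core act x y "\<lambda>n. f"
        by unfold_locales (use assms(1) cont act0 actadd f(1,2) prox[OF P] in auto)
      obtain z F where F: "F \<noteq> bot" "((\<lambda>t. act t x) \<longlongrightarrow> z) F"
        "\<forall>m. eventually (\<lambda>t. f (act (- t) z) > 0) F"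
        using c.core_result by blast
      obtain y' where F2ne: "inf F (filtercomap (\<lambda>t. act (- t) z) (nhds y')) \<noteq> bot"
        and lim2: "((\<lambda>t. act (- t) z) \<longlongrightarrow> y') (inf F (filtercomap (\<lambda>t. act (- t) z) (nhds y')))"
        using refine_filter[OF assms(1) F(1)] by blast
      define F2 where "F2 = inf F (filtercomap (\<lambda>t. act (- t) z) (nhds y'))"
      have le: "F2 \<le> F" unfolding F2_def by simp
      have lim1: "((\<lambda>t. act t x) \<longlongrightarrow> z) F2" using F(2) le by (rule tendsto_mono[rotated])
      have "(x, y') \<in> veech_rel act" unfolding veech_rel_def
        using F2ne lim1 lim2 unfolding F2_def by blast
      moreover have "f y' \<ge> 0"
      proof (rule tendsto_lowerbound)
        have "isCont f y'" using f(1) by (simp add: continuous_on_eq_continuous_at)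
        then show "((\<lambda>t. f (act (- t) z)) \<longlongrightarrow> f y') F2"
          using lim2 unfolding F2_def by (rule isCont_tendsto_compose)
        show "eventually (\<lambda>t. 0 \<le> f (act (- t) z)) F2"
          using filter_leD[OF le spec[OF F(3)]] by (rule eventually_mono) simp
        show "F2 \<noteq> bot" using F2ne unfolding F2_def .
      qed
      then have "y' \<in> N" by (rule f(3))
      ultimately show False unfolding N_def using closure_subset by blast
    qed
  qed
  have part2: "proximal_rel act \<subseteq> veech_rel act" if met: "metrizable_space (euclidean :: 'a topology)"
  proof (intro subsetI)
    fix p assume "p \<in> proximal_rel act"
    then obtain x y where p: "p = (x, y)" and P: "(x, y) \<in> proximal_rel act" by (cases p) auto
    have "first_countable (euclidean :: 'a topology)" using met by (rule metrizable_imp_first_countable)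
    then have "\<exists>B. countable B \<and> (\<forall>V\<in>B. openin euclidean V) \<and>
             (\<forall>U. openin euclidean U \<and> y \<in> U \<longrightarrow> (\<exists>V\<in>B. y \<in> V \<and> V \<subseteq> U))"
      unfolding first_countable_def by simp
    then obtain B where B0: "countable B" "\<forall>V\<in>B. openin euclidean V"
      "\<forall>U. openin euclidean U \<and> y \<in> U \<longrightarrow> (\<exists>V\<in>B. y \<in> V \<and> V \<subseteq> U)" by blast
    have B: "countable B" "\<And>V. V \<in> B \<Longrightarrow> open V"
      "\<And>U. open U \<Longrightarrow> y \<in> U \<Longrightarrow> \<exists>V\<in>B. y \<in> V \<and> V \<subseteq> U"
      using B0 by (simp_all only: open_openin[symmetric])
    define B' where "B' = {V\<in>B. y \<in> V}"
    have B'ne: "B' \<noteq> {}" using B(3)[of UNIV] unfolding B'_def by auto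
    have B'c: "countable B'" using B(1) unfolding B'_def by auto
    define W where "W = from_nat_into B'"
    have W: "open (W n)" "y \<in> W n" for n
      using from_nat_into[OF B'ne, of n] B(2) unfolding W_def B'_def by auto
    have Wb: "\<exists>n. W n \<subseteq> U" if "open U" "y \<in> U" for U
    proof -
      from B(3)[OF that] obtain V where V: "V \<in> B" "y \<in> V" "V \<subseteq> U" by blast
      have "V \<in> B'" using V(1,2) unfolding B'_def by blast
      then have "V \<in> range W" unfolding W_def using range_from_nat_into[OF B'ne B'c] by simp
      then obtain n where "V = W n" by blast
      then show ?thesis using V(3) by blast
    qed
    have "\<forall>n. \<exists>f::'a\<Rightarrow>real. continuous_on UNIV f \<and> f y > 0 \<and> (\<forall>a. f a \<ge> 0 \<longrightarrow> a \<in> W n)"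
    proof
      fix n obtain f :: "'a \<Rightarrow> real" where "continuous_on UNIV f" "f y > 0" "\<And>a. f a \<ge> 0 \<Longrightarrow> a \<in> W n"
        using cozero[OF assms(1) W[of n]] by blast
      then show "\<exists>f::'a\<Rightarrow>real. continuous_on UNIV f \<and> f y > 0 \<and> (\<forall>a. f a \<ge> 0 \<longrightarrow> a \<in> W n)" by blast
    qed
    then obtain fs :: "nat \<Rightarrow> 'a \<Rightarrow> real" where fs0: "\<forall>n. continuous_on UNIV (fs n) \<and> fs n y > 0 \<and> (\<forall>a. fs n a \<ge> 0 \<longrightarrow> a \<in> W n)"
      by (rule choice[THEN exE]) blast
    have fs: "\<And>n. continuous_on UNIV (fs n)" "\<And>n. fs n y > 0"
      "\<And>n a. fs n a \<ge> 0 \<Longrightarrow> a \<in> W n" using fs0 by auto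
    interpret c: core act x y fs
      by unfold_locales (use assms(1) cont act0 actadd fs(1,2) prox[OF P] in auto)
    obtain z F where F: "F \<noteq> bot" "((\<lambda>t. act t x) \<longlongrightarrow> z) F"
      "\<forall>m. eventually (\<lambda>t. fs m (act (- t) z) > 0) F"
      using c.core_result by blast
    have "((\<lambda>t. act (- t) z) \<longlongrightarrow> y) F"
    proof (rule topological_tendstoI)
      fix U assume "open U" "y \<in> U"
      then obtain n where "W n \<subseteq> U" using Wb by blast
      show "eventually (\<lambda>t. act (- t) z \<in> U) F"
        using F(3)[rule_format, of n] by (rule eventually_mono) (use fs(3) \<open>W n \<subseteq> U\<close> in \<open>auto intro: less_imp_le\<close>)
    qed
    then show "p \<in> veech_rel act" unfolding p veech_rel_def using F(1,2) by blast
  qed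
  show ?thesis using part1 part2 by blast
qed

end
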